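(* Fix integers $k\ge 2$ and $1 \le t \le k/2$. Let $X$ be a set of $n$ elements with a fixed but unknown total order, and consider a $(k,t)$ scale, which on input any $k$-element subset of $X$ returns the $t$-th smallest element of that subset. Let $S$ be the set of the $t-1$ smallest elements of $X$ and $L$ the set of the $k-t$ largest elements of $X$. Then there is an off-line (non-adaptive) family of $O(n^{k-t+1})$ queries (for fixed $k,t$, as $n\to\infty$) from whose results the relative order of the elements of $X\setminus(S\cup L)$ can be determined, for every possible ordering of $X$. Together with the matching lower bound, this order $n^{k-t+1}$ is best possible.
   Context: A query is a $k$-element subset of $X$; the scale returns its $t$-th smallest element. In the off-line setting the whole family of queries must be specified in advance (without knowledge of any results), and all results are then revealed simultaneously. *)

theory Defs
  imports Complex_Main
begin

text \<open>The ground set is X = {..<n}. A (hidden) total order on X is encoded by a rank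
function sigma, a bijection from {..<n} onto {..<n}: sigma x is the 0-based rank of x.\<close>

definition is_ordering :: "nat \<Rightarrow> (nat \<Rightarrow> nat) \<Rightarrow> bool" where
  "is_ordering n \<sigma> \<longleftrightarrow> bij_betw \<sigma> {..<n} {..<n}"

definition scale_answer :: "(nat \<Rightarrow> nat) \<Rightarrow> nat \<Rightarrow> nat set \<Rightarrow> nat" where
  "scale_answer \<sigma> t Q = (THE x. x \<in> Q \<and> card {y \<in> Q. \<sigma> y < \<sigma> x} = t - 1)"

definition query_family :: "nat \<Rightarrow> nat \<Rightarrow> nat set set \<Rightarrow> bool" where
  "query_family n k F \<longleftrightarrow> (\<forall>Q\<in>F. Q \<subseteq> {..<n} \<and> card Q = k)"

text \<open>X minus (S union L): S = the t-1 smallest, L = the k-t largest elements.\<close>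
definition middle :: "nat \<Rightarrow> nat \<Rightarrow> nat \<Rightarrow> (nat \<Rightarrow> nat) \<Rightarrow> nat set" where
  "middle n k t \<sigma> = {x \<in> {..<n}. t - 1 \<le> \<sigma> x \<and> \<sigma> x < n - (k - t)}"

definition determines_middle :: "nat \<Rightarrow> nat \<Rightarrow> nat \<Rightarrow> nat set set \<Rightarrow> bool" where
  "determines_middle n k t F \<longleftrightarrow>
     (\<forall>\<sigma> \<tau>. is_ordering n \<sigma> \<longrightarrow> is_ordering n \<tau> \<longrightarrow>
        (\<forall>Q\<in>F. scale_answer \<sigma> t Q = scale_answer \<tau> t Q) \<longrightarrow>
        middle n k t \<sigma> = middle n k t \<tau> \<and>
        (\<forall>x\<in>middle n k t \<sigma>. \<forall>y\<in>middle n k t \<sigma>. \<sigma> x < \<sigma> y \<longleftrightarrow> \<tau> x < \<tau> y))"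

end

theory Submission
  imports Defs
begin


definition rk :: "(nat \<Rightarrow> nat) \<Rightarrow> nat set \<Rightarrow> nat \<Rightarrow> nat" where
  "rk \<sigma> S w = card {y \<in> S. \<sigma> y < \<sigma> w}"

lemma rk_less:
  assumes "finite S" "u \<in> S" "v \<in> S" "\<sigma> u < \<sigma> v"
  shows "rk \<sigma> S u < rk \<sigma> S v"
proof -
  have "{y \<in> S. \<sigma> y < \<sigma> u} \<subset> {y \<in> S. \<sigma> y < \<sigma> v}" using assms by auto
  then show ?thesis unfolding rk_def using assms(1) by (simp add: psubset_card_mono)
qed

lemma rk_mono_iff:
  assumes "finite S" "u \<in> S" "v \<in> S" "inj_on \<sigma> S"
  shows "rk \<sigma> S u < rk \<sigma> S v \<longleftrightarrow> \<sigma> u < \<sigma> v"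
proof
  assume h: "rk \<sigma> S u < rk \<sigma> S v"
  show "\<sigma> u < \<sigma> v"
  proof (rule ccontr)
    assume "\<not> \<sigma> u < \<sigma> v"
    then have "\<sigma> v < \<sigma> u \<or> \<sigma> v = \<sigma> u" by auto
    then show False
    proof
      assume "\<sigma> v < \<sigma> u" then show False using rk_less[OF assms(1,3,2), of \<sigma>] h by auto
    next
      assume "\<sigma> v = \<sigma> u" then have "u = v" using assms(2,3,4) unfolding inj_on_def by auto
      then show False using h by simp
    qed
  qed
next
  assume "\<sigma> u < \<sigma> v" then show "rk \<sigma> S u < rk \<sigma> S v" by (rule rk_less[OF assms(1,2,3)])
qed

lemma rk_inj:
  assumes "finite S" "inj_on \<sigma> S"
  shows "inj_on (rk \<sigma> S) S"
proof (rule inj_onI)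
  fix u v assume "u \<in> S" "v \<in> S" "rk \<sigma> S u = rk \<sigma> S v"
  note h = this
  have 1: "\<not> \<sigma> u < \<sigma> v" using rk_less[OF assms(1) h(1,2), of \<sigma>] h(3) by auto
  have 2: "\<not> \<sigma> v < \<sigma> u" using rk_less[OF assms(1) h(2,1), of \<sigma>] h(3) by auto
  from 1 2 have "\<sigma> u = \<sigma> v" by simp
  then show "u = v" using assms(2) h(1,2) unfolding inj_on_def by blast
qed

lemma rk_lt_card:
  assumes "finite S" "u \<in> S"
  shows "rk \<sigma> S u < card S"
proof -
  have "{y \<in> S. \<sigma> y < \<sigma> u} \<subset> S" using assms by auto
  then show ?thesis unfolding rk_def using assms(1) by (simp add: psubset_card_mono)
qed

lemma rk_bij:
  assumes "finite S" "inj_on \<sigma> S"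
  shows "bij_betw (rk \<sigma> S) S {..<card S}"
proof -
  have "rk \<sigma> S ` S \<subseteq> {..<card S}" using rk_lt_card assms by auto
  moreover have "card (rk \<sigma> S ` S) = card {..<card S}"
    using card_image[OF rk_inj[OF assms]] by simp
  ultimately have "rk \<sigma> S ` S = {..<card S}" by (simp add: card_subset_eq)
  then show ?thesis using rk_inj[OF assms] by (simp add: bij_betw_def)
qed

lemma rk_exists:
  assumes "finite S" "inj_on \<sigma> S" "i < card S"
  shows "\<exists>u\<in>S. rk \<sigma> S u = i"
  using rk_bij[OF assms(1,2)] assms(3) unfolding bij_betw_def by (metis imageE lessThan_iff)

lemma scale_answer_eq:
  assumes "finite Q" "inj_on \<sigma> Q" "u \<in> Q" "rk \<sigma> Q u = t - 1"
  shows "scale_answer \<sigma> t Q = u"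
  unfolding scale_answer_def
proof (rule the_equality)
  show "u \<in> Q \<and> card {y \<in> Q. \<sigma> y < \<sigma> u} = t - 1" using assms by (simp add: rk_def)
next
  fix x assume "x \<in> Q \<and> card {y \<in> Q. \<sigma> y < \<sigma> x} = t - 1"
  then have "x \<in> Q" "rk \<sigma> Q x = rk \<sigma> Q u" using assms(4) by (auto simp: rk_def)
  then show "x = u" using assms(3) rk_inj[OF assms(1,2)] unfolding inj_on_def by blast
qed

lemma scale_answer_prop:
  assumes "finite Q" "inj_on \<sigma> Q" "1 \<le> t" "t \<le> card Q"
  shows "scale_answer \<sigma> t Q \<in> Q \<and> rk \<sigma> Q (scale_answer \<sigma> t Q) = t - 1"
proof -
  have "t - 1 < card Q" using assms(3,4) by simp
  then obtain u where "u \<in> Q" "rk \<sigma> Q u = t - 1" using rk_exists[OF assms(1,2)] by blast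
  then show ?thesis using scale_answer_eq[OF assms(1,2)] by simp
qed


lemma rk_remove:
  assumes "finite W" "w \<in> W" "u \<in> W" "u \<noteq> w"
  shows "rk \<sigma> (W - {w}) u = rk \<sigma> W u - (if \<sigma> w < \<sigma> u then 1 else 0)"
proof -
  have "{y \<in> W - {w}. \<sigma> y < \<sigma> u} = {y \<in> W. \<sigma> y < \<sigma> u} - {w}" by auto
  then show ?thesis unfolding rk_def using assms by (simp add: card_Diff_singleton_if)
qed

lemma card_low:
  assumes "finite S" "inj_on \<sigma> S" "i \<le> card S"
  shows "card {w \<in> S. rk \<sigma> S w < i} = i"
proof -
  have b: "bij_betw (rk \<sigma> S) S {..<card S}" by (rule rk_bij[OF assms(1,2)])
  have "rk \<sigma> S ` {w \<in> S. rk \<sigma> S w < i} = {..<i}"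
  proof
    show "rk \<sigma> S ` {w \<in> S. rk \<sigma> S w < i} \<subseteq> {..<i}" by auto
    show "{..<i} \<subseteq> rk \<sigma> S ` {w \<in> S. rk \<sigma> S w < i}"
    proof
      fix j assume "j \<in> {..<i}"
      then have "j < card S" using assms(3) by auto
      then obtain u where "u \<in> S" "rk \<sigma> S u = j" using rk_exists[OF assms(1,2)] by blast
      then show "j \<in> rk \<sigma> S ` {w \<in> S. rk \<sigma> S w < i}" using \<open>j \<in> {..<i}\<close> by force
    qed
  qed
  moreover have "inj_on (rk \<sigma> S) {w \<in> S. rk \<sigma> S w < i}"
    using rk_inj[OF assms(1,2)] by (rule inj_on_subset) auto
  ultimately show ?thesis using card_image by fastforce
qed

lemma W_answers:
  assumes "finite W" "card W = Suc k" "inj_on \<sigma> W" "1 \<le> t" "t \<le> k"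
    "\<alpha> \<in> W" "rk \<sigma> W \<alpha> = t" "\<beta> \<in> W" "rk \<sigma> W \<beta> = t - 1" "w \<in> W"
  shows "scale_answer \<sigma> t (W - {w}) = (if rk \<sigma> W w < t then \<alpha> else \<beta>)"
proof -
  have fQ: "finite (W - {w})" using assms(1) by simp
  have iQ: "inj_on \<sigma> (W - {w})" using assms(3) by (rule inj_on_subset) auto
  show ?thesis
  proof (cases "rk \<sigma> W w < t")
    case True
    then have "\<alpha> \<noteq> w" using assms(7) by auto
    have "\<sigma> w < \<sigma> \<alpha>" using rk_mono_iff[OF assms(1) assms(10) assms(6) assms(3)] True assms(7) by simp
    then have "rk \<sigma> (W - {w}) \<alpha> = t - 1" using rk_remove[OF assms(1,10,6) \<open>\<alpha> \<noteq> w\<close>] assms(7) by simp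
    then show ?thesis using scale_answer_eq[OF fQ iQ] \<open>\<alpha> \<noteq> w\<close> assms(6) True by simp
  next
    case False
    then have "\<beta> \<noteq> w" using assms(9,4) by auto
    have "\<sigma> \<beta> < \<sigma> w" using rk_mono_iff[OF assms(1) assms(8) assms(10) assms(3)] False assms(9,4) by auto
    then have "rk \<sigma> (W - {w}) \<beta> = t - 1" using rk_remove[OF assms(1,10,8) \<open>\<beta> \<noteq> w\<close>] assms(9) by simp
    then show ?thesis using scale_answer_eq[OF fQ iQ] \<open>\<beta> \<noteq> w\<close> assms(8) False by simp
  qed
qed

lemma W_lemma:
  assumes "finite W" "card W = Suc k" "inj_on \<sigma> W" "inj_on \<tau> W" "1 \<le> t" "2 * t \<le> k"
    "\<forall>w\<in>W. scale_answer \<sigma> t (W - {w}) = scale_answer \<tau> t (W - {w})"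
  shows "\<forall>u\<in>W. (rk \<sigma> W u < t \<longleftrightarrow> rk \<tau> W u < t) \<and> (rk \<sigma> W u = t \<longleftrightarrow> rk \<tau> W u = t)"
proof -
  have tk: "t \<le> k" using assms(5,6) by simp
  have t1: "t < card W" "t - 1 < card W" using assms(2) tk by auto
  obtain \<alpha> where a: "\<alpha> \<in> W" "rk \<sigma> W \<alpha> = t" using rk_exists[OF assms(1,3) t1(1)] by blast
  obtain \<beta> where b: "\<beta> \<in> W" "rk \<sigma> W \<beta> = t - 1" using rk_exists[OF assms(1,3) t1(2)] by blast
  obtain \<alpha>' where a': "\<alpha>' \<in> W" "rk \<tau> W \<alpha>' = t" using rk_exists[OF assms(1,4) t1(1)] by blast
  obtain \<beta>' where b': "\<beta>' \<in> W" "rk \<tau> W \<beta>' = t - 1" using rk_exists[OF assms(1,4) t1(2)] by blast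
  have ab: "\<alpha> \<noteq> \<beta>" using a b assms(5) by auto
  have ab': "\<alpha>' \<noteq> \<beta>'" using a' b' assms(5) by auto
  have As: "\<And>w. w \<in> W \<Longrightarrow> scale_answer \<sigma> t (W - {w}) = (if rk \<sigma> W w < t then \<alpha> else \<beta>)"
    using W_answers[OF assms(1,2,3,5) tk a b] by blast
  have At: "\<And>w. w \<in> W \<Longrightarrow> scale_answer \<tau> t (W - {w}) = (if rk \<tau> W w < t then \<alpha>' else \<beta>')"
    using W_answers[OF assms(1,2,4,5) tk a' b'] by blast
  have "\<alpha> = \<alpha>'"
  proof (rule ccontr)
    assume ne: "\<alpha> \<noteq> \<alpha>'"
    have "scale_answer \<sigma> t (W - {\<beta>}) = \<alpha>" using As[OF b(1)] b(2) assms(5) by simp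
    then have "\<alpha> = \<beta>'" using At[OF b(1)] assms(7) b(1) ne by (metis (full_types))
    then have "\<And>w. w \<in> W \<Longrightarrow> (rk \<sigma> W w < t \<longleftrightarrow> \<not> rk \<tau> W w < t)"
      using As At assms(7) ab ab' ne by (metis (full_types))
    then have "{w \<in> W. rk \<sigma> W w < t} = W - {w \<in> W. rk \<tau> W w < t}" by auto
    then have "card {w \<in> W. rk \<sigma> W w < t} = card W - card {w \<in> W. rk \<tau> W w < t}"
      using assms(1) by (simp add: card_Diff_subset)
    moreover have "card {w \<in> W. rk \<sigma> W w < t} = t" using card_low[OF assms(1,3)] assms(2) tk by simp
    moreover have "card {w \<in> W. rk \<tau> W w < t} = t" using card_low[OF assms(1,4)] assms(2) tk by simp
    ultimately show False using assms(2,6) by simp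
  qed
  have low: "\<And>w. w \<in> W \<Longrightarrow> (rk \<sigma> W w < t \<longleftrightarrow> rk \<tau> W w < t)"
    using As At assms(7) ab ab' \<open>\<alpha> = \<alpha>'\<close> by (metis (full_types))
  have eq: "\<And>u. u \<in> W \<Longrightarrow> (rk \<sigma> W u = t \<longleftrightarrow> rk \<tau> W u = t)"
  proof -
    fix u assume u: "u \<in> W"
    have "rk \<sigma> W u = t \<longleftrightarrow> u = \<alpha>" using rk_inj[OF assms(1,3)] a u unfolding inj_on_def by metis
    moreover have "rk \<tau> W u = t \<longleftrightarrow> u = \<alpha>'" using rk_inj[OF assms(1,4)] a' u unfolding inj_on_def by metis
    ultimately show "rk \<sigma> W u = t \<longleftrightarrow> rk \<tau> W u = t" using \<open>\<alpha> = \<alpha>'\<close> by simp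
  qed
  show ?thesis using low eq by blast
qed




definition FF :: "nat \<Rightarrow> nat \<Rightarrow> nat \<Rightarrow> nat set set" where
  "FF n k t = {Q. Q \<subseteq> {..<n} \<and> card Q = k \<and> t - 1 \<le> card (Q \<inter> {..<2*k})}"

lemma ord_inj: "is_ordering n \<sigma> \<Longrightarrow> S \<subseteq> {..<n} \<Longrightarrow> inj_on \<sigma> S"
  unfolding is_ordering_def bij_betw_def using inj_on_subset by blast

lemma ord_lt: "is_ordering n \<sigma> \<Longrightarrow> x < n \<Longrightarrow> \<sigma> x < n"
  unfolding is_ordering_def bij_betw_def by auto

lemma card_below:
  assumes "is_ordering n \<sigma>" "x < n"
  shows "card {u \<in> {..<n}. \<sigma> u < \<sigma> x} = \<sigma> x"
proof -
  have "\<sigma> ` {u \<in> {..<n}. \<sigma> u < \<sigma> x} = {..<\<sigma> x}"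
  proof
    show "\<sigma> ` {u \<in> {..<n}. \<sigma> u < \<sigma> x} \<subseteq> {..<\<sigma> x}" by auto
    show "{..<\<sigma> x} \<subseteq> \<sigma> ` {u \<in> {..<n}. \<sigma> u < \<sigma> x}"
    proof
      fix v assume "v \<in> {..<\<sigma> x}"
      then have "v < n" using ord_lt[OF assms] by auto
      then obtain u where "u < n" "\<sigma> u = v" using assms(1) unfolding is_ordering_def bij_betw_def
        by (metis imageE lessThan_iff)
      then show "v \<in> \<sigma> ` {u \<in> {..<n}. \<sigma> u < \<sigma> x}" using \<open>v \<in> {..<\<sigma> x}\<close> by auto
    qed
  qed
  moreover have "inj_on \<sigma> {u \<in> {..<n}. \<sigma> u < \<sigma> x}" by (rule ord_inj[OF assms(1)]) auto
  ultimately show ?thesis using card_image by fastforce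
qed

lemma card_above:
  assumes "is_ordering n \<sigma>" "x < n"
  shows "card {u \<in> {..<n}. \<sigma> x < \<sigma> u} = n - 1 - \<sigma> x"
proof -
  let ?B = "{u \<in> {..<n}. \<sigma> u < \<sigma> x}" and ?A = "{u \<in> {..<n}. \<sigma> x < \<sigma> u}"
  have i: "inj_on \<sigma> {..<n}" using ord_inj[OF assms(1)] by simp
  have "{..<n} = ?B \<union> {x} \<union> ?A"
  proof -
    have "\<And>u. u < n \<Longrightarrow> \<sigma> u = \<sigma> x \<Longrightarrow> u = x" using i assms(2) unfolding inj_on_def by auto
    then show ?thesis using assms(2) by (auto, metis linorder_neqE_nat)
  qed
  then have "n = card (?B \<union> {x} \<union> ?A)" by (metis card_lessThan)
  also have "\<dots> = card (?B \<union> {x}) + card ?A" by (rule card_Un_disjoint) auto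
  finally have "n = card (?B \<union> {x}) + card ?A" .
  moreover have "card (?B \<union> {x}) = card ?B + 1" by (subst card_Un_disjoint) auto
  ultimately show ?thesis using card_below[OF assms] by simp
qed

lemma pick:
  assumes "finite S" "j \<le> card S"
  shows "\<exists>T\<subseteq>S. card T = j \<and> min j (card (S \<inter> P)) \<le> card (T \<inter> P)"
proof (cases "j \<le> card (S \<inter> P)")
  case True
  then obtain T where "T \<subseteq> S \<inter> P" "card T = j" by (meson obtain_subset_with_card_n)
  then show ?thesis by (intro exI[of _ T]) (auto simp: Int_absorb2)
next
  case False
  have fin: "finite (S - P)" using assms(1) by simp
  have "card (S - P) = card S - card (S \<inter> P)" using assms(1)
    by (metis card_Diff_subset_Int Diff_Diff_Int Int_commute finite_Int)
  then have "j - card (S \<inter> P) \<le> card (S - P)" using assms(2) False by simp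
  then obtain T' where T': "T' \<subseteq> S - P" "card T' = j - card (S \<inter> P)" by (meson obtain_subset_with_card_n)
  let ?T = "(S \<inter> P) \<union> T'"
  have fT': "finite T'" using T'(1) fin finite_subset by blast
  have "card ?T = card (S \<inter> P) + card T'" using T'(1) fT' assms(1) by (subst card_Un_disjoint) auto
  moreover have "?T \<inter> P = S \<inter> P" using T'(1) by auto
  ultimately show ?thesis using T' False by (intro exI[of _ ?T]) auto
qed




lemma answer_in_middle:
  assumes "is_ordering n \<sigma>" "Q \<subseteq> {..<n}" "card Q = k" "1 \<le> t" "t \<le> k"
  shows "scale_answer \<sigma> t Q \<in> middle n k t \<sigma>"
proof -
  have fQ: "finite Q" using assms(2) finite_subset by blast
  have iQ: "inj_on \<sigma> Q" using ord_inj[OF assms(1,2)] .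
  define u where "u = scale_answer \<sigma> t Q"
  have u: "u \<in> Q" "rk \<sigma> Q u = t - 1" using scale_answer_prop[OF fQ iQ assms(4)] assms(3,5) u_def by auto
  have un: "u < n" using u assms(2) by auto
  let ?bQ = "{y \<in> Q. \<sigma> y < \<sigma> u}"
  have "?bQ \<subseteq> {v \<in> {..<n}. \<sigma> v < \<sigma> u}" using assms(2) by auto
  then have "card ?bQ \<le> card {v \<in> {..<n}. \<sigma> v < \<sigma> u}" by (intro card_mono) auto
  then have "card ?bQ \<le> \<sigma> u" using card_below[OF assms(1) un] by simp
  then have lo: "t - 1 \<le> \<sigma> u" using u(2) by (simp add: rk_def)
  let ?aQ = "Q - ?bQ - {u}"
  have "?aQ \<subseteq> {v \<in> {..<n}. \<sigma> u < \<sigma> v}"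
  proof
    fix y assume y: "y \<in> ?aQ"
    then have "\<sigma> y \<noteq> \<sigma> u" using iQ u(1) unfolding inj_on_def by auto
    then show "y \<in> {v \<in> {..<n}. \<sigma> u < \<sigma> v}" using y assms(2) by auto
  qed
  then have "card ?aQ \<le> card {v \<in> {..<n}. \<sigma> u < \<sigma> v}" by (intro card_mono) auto
  then have c1: "card ?aQ \<le> n - 1 - \<sigma> u" using card_above[OF assms(1) un] by simp
  have "card (Q - ?bQ) = k - (t - 1)" using u(2) fQ assms(3) by (simp add: card_Diff_subset rk_def)
  then have "card ?aQ = k - (t - 1) - 1" using u(1) fQ by (simp add: card_Diff_singleton_if)
  then have "k - t \<le> n - 1 - \<sigma> u" using c1 assms(4,5) by simp
  moreover have "\<sigma> u < n" using ord_lt[OF assms(1) un] .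
  ultimately have "\<sigma> u < n - (k - t)" by linarith
  then show ?thesis using lo un u_def unfolding middle_def by auto
qed

lemma FF_sub: "Q \<in> FF n k t \<Longrightarrow> Q \<subseteq> {..<n}" and FF_card: "Q \<in> FF n k t \<Longrightarrow> card Q = k"
  unfolding FF_def by auto

lemma middle_answered:
  assumes "is_ordering n \<sigma>" "x \<in> middle n k t \<sigma>" "2 * k \<le> n" "1 \<le> t" "2 * t \<le> k"
  shows "\<exists>Q\<in>FF n k t. scale_answer \<sigma> t Q = x"
proof -
  let ?P = "{..<2*k}"
  have xn: "x < n" and m1: "t - 1 \<le> \<sigma> x" and m2: "\<sigma> x < n - (k - t)" using assms(2) unfolding middle_def by auto
  have sxn: "\<sigma> x < n" using ord_lt[OF assms(1) xn] .
  let ?B = "{u \<in> {..<n}. \<sigma> u < \<sigma> x}" and ?A = "{u \<in> {..<n}. \<sigma> x < \<sigma> u}"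
  have cB: "card ?B = \<sigma> x" using card_below[OF assms(1) xn] .
  have cA: "card ?A = n - 1 - \<sigma> x" using card_above[OF assms(1) xn] .
  obtain T1 where T1: "T1 \<subseteq> ?B" "card T1 = t - 1" "min (t - 1) (card (?B \<inter> ?P)) \<le> card (T1 \<inter> ?P)"
    using pick[of ?B "t - 1" ?P] cB m1 by auto
  have "k - t \<le> card ?A" using cA m2 sxn by linarith
  then obtain T2 where T2: "T2 \<subseteq> ?A" "card T2 = k - t" "min (k - t) (card (?A \<inter> ?P)) \<le> card (T2 \<inter> ?P)"
    using pick[of ?A "k - t" ?P] by auto
  have fT1: "finite T1" "finite T2" using T1(1) T2(1) by (auto intro: finite_subset[of _ "{..<n}"])
  let ?Q = "T1 \<union> {x} \<union> T2"
  have s1: "\<forall>z\<in>T1. \<sigma> z < \<sigma> x \<and> z < n" "\<forall>z\<in>T2. \<sigma> x < \<sigma> z \<and> z < n" using T1(1) T2(1) by auto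
  have d1: "T1 \<inter> T2 = {}" "x \<notin> T1" "x \<notin> T2" using s1 by fastforce+
  have cQ: "card ?Q = k"
  proof -
    have "card ?Q = card (T1 \<union> {x}) + card T2" using d1 fT1 by (subst card_Un_disjoint) auto
    also have "card (T1 \<union> {x}) = card T1 + 1" using d1 fT1 by simp
    finally show ?thesis using T1(2) T2(2) assms(4,5) by simp
  qed
  have "?P \<subseteq> ?B \<union> {x} \<union> ?A"
  proof
    fix v assume "v \<in> ?P"
    then have "v < n" using assms(3) by simp
    moreover have "v \<noteq> x \<Longrightarrow> \<sigma> v \<noteq> \<sigma> x" using ord_inj[OF assms(1) order_refl] \<open>v < n\<close> xn unfolding inj_on_def by auto
    ultimately show "v \<in> ?B \<union> {x} \<union> ?A" by auto
  qed
  then have "?P \<subseteq> (?B \<inter> ?P) \<union> ({x} \<inter> ?P) \<union> (?A \<inter> ?P)" by auto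
  then have "card ?P \<le> card ((?B \<inter> ?P) \<union> ({x} \<inter> ?P) \<union> (?A \<inter> ?P))" by (intro card_mono) auto
  also have "\<dots> \<le> card ((?B \<inter> ?P) \<union> ({x} \<inter> ?P)) + card (?A \<inter> ?P)" by (rule card_Un_le)
  finally have "card ?P \<le> card ((?B \<inter> ?P) \<union> ({x} \<inter> ?P)) + card (?A \<inter> ?P)" .
  moreover have "card ((?B \<inter> ?P) \<union> ({x} \<inter> ?P)) \<le> card (?B \<inter> ?P) + card ({x} \<inter> ?P)"
    by (rule card_Un_le)
  ultimately have "2 * k \<le> card (?B \<inter> ?P) + card ({x} \<inter> ?P) + card (?A \<inter> ?P)" by simp
  moreover have "card ({x} \<inter> ?P) \<le> 1" by (simp add: card_le_Suc0_iff_eq)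
  ultimately have sP: "2 * k \<le> card (?B \<inter> ?P) + 1 + card (?A \<inter> ?P)" by linarith
  have "card (T1 \<inter> ?P) + card (T2 \<inter> ?P) \<le> card (?Q \<inter> ?P)"
  proof -
    have "T1 \<inter> ?P \<union> T2 \<inter> ?P \<subseteq> ?Q \<inter> ?P" by blast
    then have "card (T1 \<inter> ?P \<union> T2 \<inter> ?P) \<le> card (?Q \<inter> ?P)" by (intro card_mono) auto
    moreover have "card (T1 \<inter> ?P \<union> T2 \<inter> ?P) = card (T1 \<inter> ?P) + card (T2 \<inter> ?P)"
      using d1 fT1 by (subst card_Un_disjoint) auto
    ultimately show ?thesis by simp
  qed
  moreover have "t - 1 \<le> card (T1 \<inter> ?P) + card (T2 \<inter> ?P)"
  proof (cases "t - 1 \<le> card (?B \<inter> ?P)")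
    case True
    then show ?thesis using T1(3) by simp
  next
    case False
    then have "k - t \<le> card (?A \<inter> ?P)" using sP by linarith
    then have "k - t \<le> card (T2 \<inter> ?P)" using T2(3) by simp
    then show ?thesis using assms(5) by linarith
  qed
  ultimately have "t - 1 \<le> card (?Q \<inter> ?P)" by linarith
  moreover have "?Q \<subseteq> {..<n}" using s1 xn by blast
  ultimately have QF: "?Q \<in> FF n k t" using cQ unfolding FF_def by auto
  have "{y \<in> ?Q. \<sigma> y < \<sigma> x} = T1" using s1 by fastforce
  then have "rk \<sigma> ?Q x = t - 1" using T1(2) by (simp add: rk_def)
  then have "scale_answer \<sigma> t ?Q = x"
    using scale_answer_eq[of ?Q \<sigma> x t] ord_inj[OF assms(1) \<open>?Q \<subseteq> {..<n}\<close>] fT1 by auto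
  then show ?thesis using QF by blast
qed




lemma compare_core:
  assumes o: "is_ordering n \<sigma>" "is_ordering n \<tau>"
    and agree: "\<forall>Q\<in>FF n k t. scale_answer \<sigma> t Q = scale_answer \<tau> t Q"
    and xy: "x < n" "y < n" "\<sigma> x < \<sigma> y"
    and T1: "T1 \<subseteq> {u \<in> {..<n}. \<sigma> u < \<sigma> x}" and T2: "T2 \<subseteq> {u \<in> {..<n}. \<sigma> x < \<sigma> u} - {y}"
    and c: "card T1 = j" "card T2 = k - 1 - j" "j = t - 1 \<or> j = t" "j + 1 \<le> k"
    and P: "t \<le> card ((T1 \<union> {x, y} \<union> T2) \<inter> {..<2*k})"
    and t: "1 \<le> t" "2 * t \<le> k"
  shows "\<tau> x < \<tau> y"
proof -
  let ?P = "{..<2*k}"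
  define W where "W = T1 \<union> {x, y} \<union> T2"
  have s1: "\<forall>z\<in>T1. \<sigma> z < \<sigma> x \<and> z < n" "\<forall>z\<in>T2. \<sigma> x < \<sigma> z \<and> z < n \<and> z \<noteq> y" using T1 T2 by auto
  have Wn: "W \<subseteq> {..<n}" unfolding W_def using s1 xy by auto
  have fW: "finite W" using Wn finite_subset by blast
  have fT: "finite T1" "finite T2" using fW unfolding W_def by auto
  have xny: "x \<noteq> y" using xy by auto
  have cW: "card W = Suc k"
  proof -
    have d: "T1 \<inter> T2 = {}" "x \<notin> T1" "x \<notin> T2" "y \<notin> T1" "y \<notin> T2" using s1 xy by fastforce+
    have "card W = card (T1 \<union> {x, y}) + card T2" unfolding W_def using d fT by (subst card_Un_disjoint) auto
    moreover have "card (T1 \<union> {x, y}) = card T1 + 2" using d fT xny by (subst card_Un_disjoint) auto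
    ultimately show ?thesis using c by simp
  qed
  have iW: "inj_on \<sigma> W" "inj_on \<tau> W" using ord_inj[OF o(1) Wn] ord_inj[OF o(2) Wn] by auto
  have allF: "\<forall>w\<in>W. scale_answer \<sigma> t (W - {w}) = scale_answer \<tau> t (W - {w})"
  proof
    fix w assume w: "w \<in> W"
    have "card (W - {w}) = k" using cW w fW by simp
    moreover have "W - {w} \<subseteq> {..<n}" using Wn by auto
    moreover have "t - 1 \<le> card ((W - {w}) \<inter> ?P)"
    proof -
      have "(W - {w}) \<inter> ?P = (W \<inter> ?P) - {w}" by auto
      then have "card ((W - {w}) \<inter> ?P) \<ge> card (W \<inter> ?P) - 1" by (simp add: card_Diff_singleton_if)
      then show ?thesis using P unfolding W_def by linarith
    qed
    ultimately have "W - {w} \<in> FF n k t" unfolding FF_def by auto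
    then show "scale_answer \<sigma> t (W - {w}) = scale_answer \<tau> t (W - {w})" using agree by blast
  qed
  have WL: "\<forall>u\<in>W. (rk \<sigma> W u < t \<longleftrightarrow> rk \<tau> W u < t) \<and> (rk \<sigma> W u = t \<longleftrightarrow> rk \<tau> W u = t)"
    by (rule W_lemma[OF fW cW iW t allF])
  have xW: "x \<in> W" and yW: "y \<in> W" unfolding W_def by auto
  have "{z \<in> W. \<sigma> z < \<sigma> x} = T1" unfolding W_def using s1 xy by fastforce
  then have rx: "rk \<sigma> W x = j" using c(1) by (simp add: rk_def)
  have "insert x T1 \<subseteq> {z \<in> W. \<sigma> z < \<sigma> y}" unfolding W_def using s1 xy by fastforce
  then have "card (insert x T1) \<le> rk \<sigma> W y" unfolding rk_def using fW by (intro card_mono) auto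
  moreover have "card (insert x T1) = j + 1" using c(1) fT s1 by (subst card_insert_disjoint) auto
  ultimately have ry: "j + 1 \<le> rk \<sigma> W y" by simp
  have hx: "rk \<sigma> W x < t \<longleftrightarrow> rk \<tau> W x < t" "rk \<sigma> W x = t \<longleftrightarrow> rk \<tau> W x = t"
    using WL xW by blast+
  have hy: "rk \<sigma> W y < t \<longleftrightarrow> rk \<tau> W y < t" "rk \<sigma> W y = t \<longleftrightarrow> rk \<tau> W y = t"
    using WL yW by blast+
  have "rk \<tau> W x < rk \<tau> W y"
    using c(3)
  proof
    assume "j = t - 1"
    then have "rk \<tau> W x < t" "\<not> rk \<tau> W y < t" using hx hy rx ry t(1) by simp_all
    then show ?thesis by simp
  next
    assume "j = t"
    then have "rk \<tau> W x = t" "\<not> rk \<tau> W y < t" "rk \<tau> W y \<noteq> t" using hx hy rx ry by simp_all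
    then show ?thesis by simp
  qed
  then show ?thesis using rk_mono_iff[OF fW xW yW iW(2)] by simp
qed

lemma compare:
  assumes o: "is_ordering n \<sigma>" "is_ordering n \<tau>"
    and agree: "\<forall>Q\<in>FF n k t. scale_answer \<sigma> t Q = scale_answer \<tau> t Q"
    and mx: "x \<in> middle n k t \<sigma>" and my: "y \<in> middle n k t \<sigma>" and lt: "\<sigma> x < \<sigma> y"
    and n: "2 * k \<le> n" and t: "1 \<le> t" "2 * t \<le> k"
  shows "\<tau> x < \<tau> y"
proof -
  let ?P = "{..<2*k}"
  have xn: "x < n" and m1: "t - 1 \<le> \<sigma> x" using mx unfolding middle_def by auto
  have yn: "y < n" and m2: "\<sigma> y < n - (k - t)" using my unfolding middle_def by auto
  let ?B = "{u \<in> {..<n}. \<sigma> u < \<sigma> x}" and ?A = "{u \<in> {..<n}. \<sigma> x < \<sigma> u} - {y}"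
  have cB: "card ?B = \<sigma> x" using card_below[OF o(1) xn] .
  have "card {u \<in> {..<n}. \<sigma> x < \<sigma> u} = n - 1 - \<sigma> x" using card_above[OF o(1) xn] .
  moreover have "y \<in> {u \<in> {..<n}. \<sigma> x < \<sigma> u}" using yn lt by auto
  ultimately have cA: "card ?A = n - 1 - \<sigma> x - 1" by (simp add: card_Diff_singleton_if)
  have cA2: "k - t \<le> card ?A" using cA m2 lt by linarith
  have fB: "finite ?B" "finite ?A" by auto
  have sB: "\<forall>z\<in>?B. z \<noteq> x \<and> z \<noteq> y" "\<forall>z\<in>?A. z \<noteq> x \<and> z \<noteq> y" using lt by auto
  show ?thesis
  proof (cases "t \<le> card (?B \<inter> ?P)")
    case True
    then obtain T1 where T1: "T1 \<subseteq> ?B \<inter> ?P" "card T1 = t" by (meson obtain_subset_with_card_n)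
    have "k - 1 - t \<le> card ?A" using cA2 by linarith
    then obtain T2 where T2: "T2 \<subseteq> ?A" "card T2 = k - 1 - t" by (meson obtain_subset_with_card_n)
    have "T1 \<subseteq> (T1 \<union> {x, y} \<union> T2) \<inter> ?P" using T1(1) by blast
    then have "card T1 \<le> card ((T1 \<union> {x, y} \<union> T2) \<inter> ?P)" by (intro card_mono) auto
    then have P: "t \<le> card ((T1 \<union> {x, y} \<union> T2) \<inter> ?P)" using T1(2) by simp
    show ?thesis
      by (rule compare_core[OF o agree xn yn lt _ T2(1) T1(2) T2(2) _ _ P t]) (use T1(1) t in auto)
  next
    case False
    obtain T1 where T1: "T1 \<subseteq> ?B" "card T1 = t - 1" "min (t - 1) (card (?B \<inter> ?P)) \<le> card (T1 \<inter> ?P)"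
      using pick[of ?B "t - 1" ?P] cB m1 by auto
    obtain T2 where T2: "T2 \<subseteq> ?A" "card T2 = k - t" "min (k - t) (card (?A \<inter> ?P)) \<le> card (T2 \<inter> ?P)"
      using pick[of ?A "k - t" ?P] cA2 by auto
    have fT: "finite T1" "finite T2" using T1(1) T2(1) fB by (auto intro: finite_subset)
    have "?P \<subseteq> (?B \<inter> ?P) \<union> ({x, y} \<inter> ?P) \<union> (?A \<inter> ?P)"
    proof
      fix v assume "v \<in> ?P"
      then have "v < n" using n by simp
      moreover have "v \<noteq> x \<Longrightarrow> \<sigma> v \<noteq> \<sigma> x" using ord_inj[OF o(1) order_refl] \<open>v < n\<close> xn unfolding inj_on_def by auto
      ultimately show "v \<in> (?B \<inter> ?P) \<union> ({x, y} \<inter> ?P) \<union> (?A \<inter> ?P)" using \<open>v \<in> ?P\<close> by auto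
    qed
    then have "card ?P \<le> card ((?B \<inter> ?P) \<union> ({x, y} \<inter> ?P) \<union> (?A \<inter> ?P))" by (intro card_mono) auto
    also have "\<dots> \<le> card ((?B \<inter> ?P) \<union> ({x, y} \<inter> ?P)) + card (?A \<inter> ?P)" by (rule card_Un_le)
    also have "card ((?B \<inter> ?P) \<union> ({x, y} \<inter> ?P)) \<le> card (?B \<inter> ?P) + card ({x, y} \<inter> ?P)" by (rule card_Un_le)
    finally have "2 * k \<le> card (?B \<inter> ?P) + card ({x, y} \<inter> ?P) + card (?A \<inter> ?P)" by simp
    moreover have "card ({x, y} \<inter> ?P) \<le> 2"
    proof -
      have "card ({x, y} \<inter> ?P) \<le> card {x, y}" by (intro card_mono) auto
      also have "\<dots> \<le> 2" by (simp add: card_insert_if)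
      finally show ?thesis .
    qed
    ultimately have sP: "2 * k \<le> card (?B \<inter> ?P) + 2 + card (?A \<inter> ?P)" by linarith
    have s1: "\<forall>z\<in>T1. \<sigma> z < \<sigma> x" "\<forall>z\<in>T2. \<sigma> x < \<sigma> z" using T1(1) T2(1) by auto
    have "T1 \<inter> ?P \<union> T2 \<inter> ?P \<subseteq> (T1 \<union> {x, y} \<union> T2) \<inter> ?P" by blast
    then have "card (T1 \<inter> ?P \<union> T2 \<inter> ?P) \<le> card ((T1 \<union> {x, y} \<union> T2) \<inter> ?P)" by (intro card_mono) auto
    moreover have "card (T1 \<inter> ?P \<union> T2 \<inter> ?P) = card (T1 \<inter> ?P) + card (T2 \<inter> ?P)"
      using fT s1 by (subst card_Un_disjoint) fastforce+
    moreover have "t \<le> card (T1 \<inter> ?P) + card (T2 \<inter> ?P)"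
    proof (cases "k - t \<le> card (?A \<inter> ?P)")
      case True
      then have "k - t \<le> card (T2 \<inter> ?P)" using T2(3) by simp
      then show ?thesis using t by linarith
    next
      case c2: False
      then have "card (?A \<inter> ?P) \<le> card (T2 \<inter> ?P)" using T2(3) by simp
      moreover have "card (?B \<inter> ?P) \<le> card (T1 \<inter> ?P)" using T1(3) False by simp
      ultimately show ?thesis using sP t by linarith
    qed
    ultimately have P: "t \<le> card ((T1 \<union> {x, y} \<union> T2) \<inter> ?P)" by linarith
    show ?thesis
      by (rule compare_core[OF o agree xn yn lt T1(1) T2(1) T1(2) _ _ _ P t]) (use T2(2) t in auto)
  qed
qed

lemma determines_FF:
  assumes n: "2 * k \<le> n" and t: "1 \<le> t" "2 * t \<le> k"
  shows "determines_middle n k t (FF n k t)"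
  unfolding determines_middle_def
proof (intro allI impI)
  fix \<sigma> \<tau> assume o: "is_ordering n \<sigma>" "is_ordering n \<tau>"
    and agree: "\<forall>Q\<in>FF n k t. scale_answer \<sigma> t Q = scale_answer \<tau> t Q"
  have tk: "t \<le> k" using t by simp
  have agree': "\<forall>Q\<in>FF n k t. scale_answer \<tau> t Q = scale_answer \<sigma> t Q" using agree by simp
  have sub: "middle n k t \<sigma> \<subseteq> middle n k t \<tau>"
    if o1: "is_ordering n \<sigma>" and o2: "is_ordering n \<tau>"
    and ag: "\<forall>Q\<in>FF n k t. scale_answer \<sigma> t Q = scale_answer \<tau> t Q" for \<sigma> \<tau>
  proof
    fix x assume "x \<in> middle n k t \<sigma>"
    then obtain Q where Q: "Q \<in> FF n k t" "scale_answer \<sigma> t Q = x"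
      using middle_answered[OF o1 _ n t] by blast
    then have "scale_answer \<tau> t Q = x" using ag by simp
    then show "x \<in> middle n k t \<tau>" using answer_in_middle[OF o2 FF_sub[OF Q(1)] FF_card[OF Q(1)] t(1) tk] by simp
  qed
  have meq: "middle n k t \<sigma> = middle n k t \<tau>" using sub[OF o agree] sub[OF o(2,1) agree'] by blast
  show "middle n k t \<sigma> = middle n k t \<tau> \<and>
        (\<forall>x\<in>middle n k t \<sigma>. \<forall>y\<in>middle n k t \<sigma>. (\<sigma> x < \<sigma> y) = (\<tau> x < \<tau> y))"
  proof (intro conjI ballI meq)
    fix x y assume x: "x \<in> middle n k t \<sigma>" and y: "y \<in> middle n k t \<sigma>"
    show "(\<sigma> x < \<sigma> y) = (\<tau> x < \<tau> y)"
    proof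
      assume "\<sigma> x < \<sigma> y" then show "\<tau> x < \<tau> y" using compare[OF o agree x y _ n t] by simp
    next
      assume "\<tau> x < \<tau> y" then show "\<sigma> x < \<sigma> y" using compare[OF o(2,1) agree' _ _ _ n t] x y meq by simp
    qed
  qed
qed




lemma card_small_subsets:
  assumes "1 \<le> n"
  shows "card {A. A \<subseteq> {..<n::nat} \<and> card A \<le> m} \<le> (m + 1) * n ^ m"
proof -
  have eq: "{A. A \<subseteq> {..<n} \<and> card A \<le> m} = (\<Union>j\<in>{..m}. {A. A \<subseteq> {..<n} \<and> card A = j})" by auto
  have "card (\<Union>j\<in>{..m}. {A. A \<subseteq> {..<n} \<and> card A = j}) \<le> (\<Sum>j\<in>{..m}. card {A. A \<subseteq> {..<n} \<and> card A = j})"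
    by (rule card_UN_le) simp
  also have "\<dots> = (\<Sum>j\<in>{..m}. n choose j)" by (simp add: n_subsets)
  also have "\<dots> \<le> (\<Sum>j\<in>{..m}. n ^ m)"
  proof (rule sum_mono)
    fix j assume j: "j \<in> {..m}"
    have "n choose j \<le> n ^ j"
      by (cases "j \<le> n") (auto simp: binomial_le_pow binomial_eq_0)
    also have "\<dots> \<le> n ^ m" using j assms by (intro power_increasing) auto
    finally show "n choose j \<le> n ^ m" .
  qed
  also have "\<dots> = (m + 1) * n ^ m" by simp
  finally show ?thesis using eq by simp
qed

lemma card_FF:
  assumes "1 \<le> n" "1 \<le> t" "t \<le> k"
  shows "card (FF n k t) \<le> 2 ^ (2 * k) * ((k - t + 1 + 1) * n ^ (k - t + 1))"
proof -
  let ?P = "{..<2*k}" and ?m = "k - t + 1"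
  let ?S = "{A. A \<subseteq> {..<n::nat} \<and> card A \<le> ?m}"
  have inj: "inj_on (\<lambda>Q. (Q \<inter> ?P, Q - ?P)) (FF n k t)"
    by (rule inj_onI) (metis Int_Diff_Un prod.inject)
  have img: "(\<lambda>Q. (Q \<inter> ?P, Q - ?P)) ` (FF n k t) \<subseteq> Pow ?P \<times> ?S"
  proof
    fix z assume "z \<in> (\<lambda>Q. (Q \<inter> ?P, Q - ?P)) ` (FF n k t)"
    then obtain Q where Q: "Q \<in> FF n k t" "z = (Q \<inter> ?P, Q - ?P)" by blast
    then have Qn: "Q \<subseteq> {..<n}" "card Q = k" "t - 1 \<le> card (Q \<inter> ?P)" unfolding FF_def by auto
    have fQ: "finite Q" using Qn(1) finite_subset by blast
    have "card (Q - ?P) = card Q - card (Q \<inter> ?P)" using fQ by (metis card_Diff_subset_Int Diff_Diff_Int Int_commute finite_Int)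
    then have "card (Q - ?P) \<le> ?m" using Qn(2,3) by linarith
    then show "z \<in> Pow ?P \<times> ?S" using Q(2) Qn(1) by auto
  qed
  have fS: "finite ?S" by (rule finite_subset[of _ "Pow {..<n}"]) auto
  have "card (FF n k t) = card ((\<lambda>Q. (Q \<inter> ?P, Q - ?P)) ` (FF n k t))" using card_image[OF inj] by simp
  also have "\<dots> \<le> card (Pow ?P \<times> ?S)" using img fS by (intro card_mono) auto
  also have "\<dots> = 2 ^ (2 * k) * card ?S" by (simp add: card_cartesian_product card_Pow)
  also have "\<dots> \<le> 2 ^ (2 * k) * ((?m + 1) * n ^ ?m)" using card_small_subsets[OF assms(1), of ?m] by (intro mult_le_mono2)
  finally show ?thesis .
qed




lemma cover:
  assumes qf: "query_family n k F" and det: "determines_middle n k t F"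
    and B: "B \<subseteq> {..<n}" "card B = k - t + 2"
    and n: "k + 1 \<le> n" and t: "1 \<le> t" "2 * t \<le> k"
  shows "\<exists>Q\<in>F. k - t + 1 \<le> card (Q \<inter> B)"
proof (rule ccontr)
  assume "\<not> ?thesis"
  then have small: "\<forall>Q\<in>F. card (Q \<inter> B) \<le> k - t" by auto
  define s where "s = k - t + 2"
  have sn: "s \<le> n" using n t unfolding s_def by simp
  have fB: "finite B" using B(1) finite_subset by blast
  obtain f1 where f1: "bij_betw f1 B {n - s..<n}"
    using finite_same_card_bij[of B "{n - s..<n}"] fB B(2) sn unfolding s_def by auto
  have cC: "card ({..<n} - B) = n - s" using B fB unfolding s_def by (simp add: card_Diff_subset)
  obtain f2 where f2: "bij_betw f2 ({..<n} - B) {..<n - s}"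
    using finite_same_card_bij[of "{..<n} - B" "{..<n - s}"] cC by auto
  define \<sigma> where "\<sigma> x = (if x \<in> B then f1 x else f2 x)" for x
  have b1: "bij_betw \<sigma> B {n - s..<n}" using f1 by (rule bij_betw_cong[THEN iffD1, rotated]) (simp add: \<sigma>_def)
  have b2: "bij_betw \<sigma> ({..<n} - B) {..<n - s}" using f2 by (rule bij_betw_cong[THEN iffD1, rotated]) (simp add: \<sigma>_def)
  have "bij_betw \<sigma> (B \<union> ({..<n} - B)) ({n - s..<n} \<union> {..<n - s})" by (rule bij_betw_combine[OF b1 b2]) auto
  moreover have "B \<union> ({..<n} - B) = {..<n}" using B(1) by auto
  moreover have "{n - s..<n} \<union> {..<n - s} = {..<n}" by auto
  ultimately have os: "is_ordering n \<sigma>" unfolding is_ordering_def by simp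
  have low: "\<And>y. y < n \<Longrightarrow> y \<notin> B \<Longrightarrow> \<sigma> y < n - s"
    using b2 unfolding bij_betw_def by auto
  have "n - s \<in> \<sigma> ` B" "n - s + 1 \<in> \<sigma> ` B" using b1 sn t unfolding bij_betw_def s_def by auto
  then obtain a b where "a \<in> B" "n - s = \<sigma> a" "b \<in> B" "n - s + 1 = \<sigma> b" by (meson imageE)
  then have ab: "a \<in> B" "\<sigma> a = n - s" "b \<in> B" "\<sigma> b = n - s + 1" by auto
  have an: "a < n" "b < n" using ab B(1) by auto
  have anb: "a \<noteq> b" using ab by auto
  define sw where "sw x = (if x = a then b else if x = b then a else x)" for x
  have bsw: "bij_betw sw {..<n} {..<n}"
    by (rule bij_betw_byWitness[of _ sw]) (auto simp: sw_def an)
  define \<tau> where "\<tau> = \<sigma> \<circ> sw"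
  have ot: "is_ordering n \<tau>" using bij_betw_trans[OF bsw] os unfolding is_ordering_def \<tau>_def by blast
  have \<tau>a: "\<tau> a = \<sigma> b" and \<tau>b: "\<tau> b = \<sigma> a" and \<tau>o: "\<And>x. x \<noteq> a \<Longrightarrow> x \<noteq> b \<Longrightarrow> \<tau> x = \<sigma> x"
    unfolding \<tau>_def sw_def using anb by auto
  have agree: "\<forall>Q\<in>F. scale_answer \<sigma> t Q = scale_answer \<tau> t Q"
  proof
    fix Q assume Q: "Q \<in> F"
    have Qn: "Q \<subseteq> {..<n}" "card Q = k" using Q qf unfolding query_family_def by auto
    have fQ: "finite Q" using Qn(1) finite_subset by blast
    have tk: "t \<le> k" using t by simp
    define u where "u = scale_answer \<sigma> t Q"
    have u: "u \<in> Q" "rk \<sigma> Q u = t - 1"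
      using scale_answer_prop[OF fQ ord_inj[OF os Qn(1)] t(1)] Qn(2) tk u_def by auto
    have un: "u < n" using u(1) Qn(1) by auto
    have cQB: "t \<le> card (Q - B)"
    proof -
      have "card (Q - B) = card Q - card (Q \<inter> B)" using fQ by (metis card_Diff_subset_Int Diff_Diff_Int Int_commute finite_Int)
      then show ?thesis using small Q Qn(2) t by fastforce
    qed
    have uab: "u \<noteq> a \<and> u \<noteq> b"
    proof (rule ccontr)
      assume "\<not> (u \<noteq> a \<and> u \<noteq> b)"
      then have su: "n - s \<le> \<sigma> u" using ab by auto
      have "Q - B \<subseteq> {y \<in> Q. \<sigma> y < \<sigma> u}" using low Qn(1) su by fastforce
      then have "card (Q - B) \<le> rk \<sigma> Q u" unfolding rk_def using fQ by (intro card_mono) auto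
      then show False using cQB u(2) t by linarith
    qed
    have su: "\<sigma> u \<noteq> n - s" "\<sigma> u \<noteq> n - s + 1"
      using ab uab un an ord_inj[OF os order_refl] unfolding inj_on_def by (metis lessThan_iff)+
    have "{y \<in> Q. \<tau> y < \<tau> u} = {y \<in> Q. \<sigma> y < \<sigma> u}"
    proof -
      have "\<And>y. \<tau> y < \<tau> u \<longleftrightarrow> \<sigma> y < \<sigma> u"
      proof -
        fix y
        have tu: "\<tau> u = \<sigma> u" using \<tau>o uab by simp
        show "\<tau> y < \<tau> u \<longleftrightarrow> \<sigma> y < \<sigma> u"
        proof (cases "y = a \<or> y = b")
          case True then show ?thesis using \<tau>a \<tau>b ab su tu by auto
        next
          case False then show ?thesis using \<tau>o tu by simp
        qed
      qed
      then show ?thesis by simp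
    qed
    then have "rk \<tau> Q u = t - 1" using u(2) by (simp add: rk_def)
    then have "scale_answer \<tau> t Q = u" using scale_answer_eq[OF fQ ord_inj[OF ot Qn(1)] u(1)] by simp
    then show "scale_answer \<sigma> t Q = scale_answer \<tau> t Q" using u_def by simp
  qed
  have ma: "a \<in> middle n k t \<sigma>" "b \<in> middle n k t \<sigma>" using ab an n t unfolding middle_def s_def by auto
  have "\<sigma> a < \<sigma> b \<longleftrightarrow> \<tau> a < \<tau> b" using det os ot agree ma unfolding determines_middle_def by blast
  then show False using \<tau>a \<tau>b ab by simp
qed




lemma card_lower:
  assumes qf: "query_family n k F" and det: "determines_middle n k t F"
    and n: "k + 1 \<le> n" and t: "1 \<le> t" "2 * t \<le> k"
  shows "n choose (k - t + 2) \<le> card F * (2 ^ k * (n + 1))"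
proof -
  define s where "s = k - t + 2"
  define E where "E = insert {} ((\<lambda>x. {x}) ` {..<n})"
  define Sig where "Sig = (SIGMA Q:F. Pow Q \<times> E)"
  define g where "g = (\<lambda>(Q::nat set, D::nat set, e::nat set). D \<union> e)"
  have fF: "finite F" using qf unfolding query_family_def by (intro finite_subset[of F "Pow {..<n}"]) auto
  have cardQ: "\<And>Q. Q \<in> F \<Longrightarrow> card Q = k" and subQ: "\<And>Q. Q \<in> F \<Longrightarrow> Q \<subseteq> {..<n}"
    using qf unfolding query_family_def by auto
  have fQ: "\<And>Q. Q \<in> F \<Longrightarrow> finite Q" using subQ finite_subset by blast
  have fE: "finite E" unfolding E_def by simp
  have cE: "card E \<le> n + 1"
  proof -
    have "card E \<le> card ((\<lambda>x. {x}) ` {..<n}) + 1" unfolding E_def by (simp add: card_insert_if)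
    also have "card ((\<lambda>x. {x}) ` {..<n}) \<le> n" using card_image_le[of "{..<n}" "\<lambda>x. {x}"] by simp
    finally show ?thesis by simp
  qed
  have sub: "{B. B \<subseteq> {..<n} \<and> card B = s} \<subseteq> g ` Sig"
  proof
    fix B assume "B \<in> {B. B \<subseteq> {..<n} \<and> card B = s}"
    then have B: "B \<subseteq> {..<n}" "card B = s" by auto
    then obtain Q where Q: "Q \<in> F" "k - t + 1 \<le> card (Q \<inter> B)"
      using cover[OF qf det B(1) _ n t] unfolding s_def by blast
    have fB: "finite B" using B(1) finite_subset by blast
    have "card (B - Q) = card B - card (B \<inter> Q)" using fB by (metis card_Diff_subset_Int Diff_Diff_Int Int_commute finite_Int)
    then have c1: "card (B - Q) \<le> 1" using B(2) Q(2) unfolding s_def by (simp add: Int_commute)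
    have "B - Q \<in> E"
    proof (cases "card (B - Q) = 0")
      case True
      then have "B - Q = {}" using fB by simp
      then show ?thesis unfolding E_def by simp
    next
      case False
      then have "card (B - Q) = 1" using c1 by simp
      then obtain x where x: "B - Q = {x}" by (meson card_1_singletonE)
      then have "x < n" using B(1) by auto
      then show ?thesis using x unfolding E_def by auto
    qed
    then have "(Q, Q \<inter> B, B - Q) \<in> Sig" unfolding Sig_def using Q(1) by auto
    moreover have "B = g (Q, Q \<inter> B, B - Q)" unfolding g_def by auto
    ultimately show "B \<in> g ` Sig" by blast
  qed
  have fSig: "finite Sig" unfolding Sig_def using fF fQ fE by (intro finite_SigmaI) auto
  have "n choose s = card {B. B \<subseteq> {..<n} \<and> card B = s}" using n_subsets[of "{..<n}" s] by simp
  also have "\<dots> \<le> card (g ` Sig)" using sub fSig by (intro card_mono) auto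
  also have "\<dots> \<le> card Sig" using fSig by (rule card_image_le)
  also have "\<dots> = (\<Sum>Q\<in>F. card (Pow Q \<times> E))" unfolding Sig_def using fF fQ fE by (subst card_SigmaI) auto
  also have "\<dots> = (\<Sum>Q\<in>F. 2 ^ k * card E)" using fQ cardQ fE by (intro sum.cong) (auto simp: card_cartesian_product card_Pow)
  also have "\<dots> = card F * (2 ^ k * card E)" by simp
  also have "\<dots> \<le> card F * (2 ^ k * (n + 1))" using cE by (intro mult_le_mono2) simp
  finally show ?thesis unfolding s_def .
qed




lemma aux:
  fixes a S K X F :: real
  assumes "a > 0" "S > 0" "K > 0" "a * X / S \<le> F * K * a"
  shows "X / (S * K) \<le> F"
proof -
  have "a * X \<le> F * K * a * S" using assms(2,4) by (simp add: divide_le_eq)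
  then have "a * X \<le> a * (F * K * S)" by (simp add: algebra_simps)
  then have "X \<le> F * K * S" using assms(1) by simp
  then show ?thesis using assms(2,3) by (simp add: divide_le_eq algebra_simps)
qed
theorem mainTheorem4:
  fixes k t :: nat
  assumes "k \<ge> 2" and "1 \<le> t" and "2 * t \<le> k"
  shows "(\<exists>C::real. \<forall>\<^sub>F n in sequentially. \<exists>F. query_family n k F \<and> determines_middle n k t F
            \<and> real (card F) \<le> C * real n ^ (k - t + 1))
       \<and> (\<exists>c::real. c > 0 \<and> (\<forall>\<^sub>F n in sequentially. \<forall>F. query_family n k F \<longrightarrow> determines_middle n k t F
            \<longrightarrow> c * real n ^ (k - t + 1) \<le> real (card F)))"
proof
  let ?m = "k - t + 1"
  show "\<exists>C::real. \<forall>\<^sub>F n in sequentially. \<exists>F. query_family n k F \<and> determines_middle n k t F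
            \<and> real (card F) \<le> C * real n ^ ?m"
  proof (rule exI[of _ "2 ^ (2 * k) * (real ?m + 1)"], rule eventually_sequentiallyI[of "2 * k"])
    fix n assume n: "2 * k \<le> n"
    have n1: "1 \<le> n" using n assms by simp
    have q: "query_family n k (FF n k t)" unfolding query_family_def FF_def by auto
    have d: "determines_middle n k t (FF n k t)" using determines_FF[OF n assms(2,3)] .
    have "card (FF n k t) \<le> 2 ^ (2 * k) * ((?m + 1) * n ^ ?m)"
      using card_FF[OF n1 assms(2)] assms by simp
    then have 1: "real (card (FF n k t)) \<le> real (2 ^ (2 * k) * ((?m + 1) * n ^ ?m))" by (simp only: of_nat_le_iff)
    have 2: "real (2 ^ (2 * k) * ((?m + 1) * n ^ ?m)) = (2 ^ (2 * k) * (real ?m + 1)) * real n ^ ?m"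
      by (simp only: of_nat_mult of_nat_power of_nat_add of_nat_1 of_nat_numeral)
    have "real (card (FF n k t)) \<le> (2 ^ (2 * k) * (real ?m + 1)) * real n ^ ?m" using 1 2 by linarith
    with q d show "\<exists>F. query_family n k F \<and> determines_middle n k t F
            \<and> real (card F) \<le> (2 ^ (2 * k) * (real ?m + 1)) * real n ^ ?m" by blast
  qed
next
  let ?m = "k - t + 1"
  let ?s = "k - t + 2"
  define c :: real where "c = 1 / (real ?s ^ ?s * 2 ^ (k + 1))"
  have cpos: "c > 0" unfolding c_def by simp
  show "\<exists>c::real. c > 0 \<and> (\<forall>\<^sub>F n in sequentially. \<forall>F. query_family n k F \<longrightarrow> determines_middle n k t F
            \<longrightarrow> c * real n ^ ?m \<le> real (card F))"
  proof (rule exI[of _ c], intro conjI cpos eventually_sequentiallyI[of "k + 1"] allI impI)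
    fix n F assume n: "k + 1 \<le> n" and qf: "query_family n k F" and det: "determines_middle n k t F"
    have sn: "?s \<le> n" using n assms by simp
    have npos: "real n > 0" using n by simp
    have "(real n / real ?s) ^ ?s \<le> real (n choose ?s)" using binomial_ge_n_over_k_pow_k[OF sn] by simp
    also have "\<dots> \<le> real (card F * (2 ^ k * (n + 1)))"
      using card_lower[OF qf det n assms(2,3)] by (simp only: of_nat_le_iff)
    also have "\<dots> = real (card F) * 2 ^ k * (real n + 1)" by (simp add: algebra_simps)
    also have "\<dots> \<le> real (card F) * 2 ^ k * (2 * real n)"
      using npos n by (intro mult_left_mono) auto
    finally have h: "(real n / real ?s) ^ ?s \<le> real (card F) * 2 ^ (k + 1) * real n" by simp
    have "(real n / real ?s) ^ ?s = real n * real n ^ ?m / real ?s ^ ?s"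
      by (simp add: power_divide)
    with h have "real n * real n ^ ?m / real ?s ^ ?s \<le> real (card F) * 2 ^ (k + 1) * real n" by simp
    then have "real n ^ ?m / (real ?s ^ ?s * 2 ^ (k + 1)) \<le> real (card F)"
      by (intro aux[OF npos]) auto
    then show "c * real n ^ ?m \<le> real (card F)" unfolding c_def by simp
  qed
qed


end
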